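(* For every $n\ge1$, $\mathrm{Extr}(\mathcal A^n_\oplus)\setminus\mathcal A^{n-1}_\oplus\subseteq\mathrm{Extr}(\mathcal A^n_+)$.
   Context: Let $\mathcal H=L^2(\mathbb R)$ with Fock basis $\{|k\rangle\}$, annihilation operator $\hat a$, $\hat n=\hat a^\dagger\hat a$, $\hat D(\alpha)=\exp(\alpha\hat a^\dagger-\alpha^*\hat a)$, $\hat\Pi(\alpha)=\hat D(\alpha)(-1)^{\hat n}\hat D(\alpha)^\dagger$, and Wigner function $W_{\hat A}(\alpha)=\frac2\pi\mathrm{Tr}[\hat A\hat\Pi(\alpha)]$. A quasi-state is a Hermitian trace-class operator of unit trace. With $\hat P_n=\sum_{k=0}^n|k\rangle\langle k|$, $\mathcal A^n_+$ is the set of quasi-states $\hat A$ with $\hat P_n\hat A\hat P_n=\hat A$ and $W_{\hat A}(\alpha)\ge0$ for all $\alpha\in\mathbb C$; $\mathcal A^n_\oplus$ is the subset of $\mathcal A^n_+$ consisting of phase-invariant operators, i.e. those diagonal in the Fock basis. $\mathrm{Extr}(\mathcal C)$ is the set of extreme points of a convex set $\mathcal C$ ($a$ such that $a=\frac12(x+y)$, $x,y\in\mathcal C$, forces $x=y=a$). *)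

theory Defs
  imports Complex_Main
begin

(* Operators supported on span{|0>,...,|n>} are represented by their Fock-basis
   matrix elements A j k = <j|A|k>, as functions nat => nat => complex. *)

(* Fock matrix element <m| D(beta) |k> of the displacement operator
   D(beta) = exp(beta a^dag - cnj beta a), written out via the normal-ordered form
   D(beta) = exp(-|beta|^2/2) exp(beta a^dag) exp(-cnj beta a). *)
definition disp_elem :: "complex \<Rightarrow> nat \<Rightarrow> nat \<Rightarrow> complex" where
  "disp_elem \<beta> m k =
     complex_of_real (exp (- (cmod \<beta>)\<^sup>2 / 2)) *
     (\<Sum>l\<le>min m k. \<beta> ^ (m - l) * (- cnj \<beta>) ^ (k - l) *
        complex_of_real (sqrt (fact m * fact k) / (fact l * fact (m - l) * fact (k - l))))"

(* <m| Pi(alpha) |k> with Pi(alpha) = D(alpha) (-1)^n D(alpha)^dag,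
   inserting the Fock resolution of identity. *)
definition parity_elem :: "complex \<Rightarrow> nat \<Rightarrow> nat \<Rightarrow> complex" where
  "parity_elem \<alpha> m k = (\<Sum>l. disp_elem \<alpha> m l * (-1) ^ l * cnj (disp_elem \<alpha> k l))"

(* Wigner function W_A(alpha) = 2/pi Tr[A Pi(alpha)] of an operator supported on
   span{|0>,...,|n>} (real for Hermitian A; we take the real part). *)
definition wigner :: "nat \<Rightarrow> (nat \<Rightarrow> nat \<Rightarrow> complex) \<Rightarrow> complex \<Rightarrow> real" where
  "wigner n A \<alpha> = 2 / pi * Re (\<Sum>j\<le>n. \<Sum>k\<le>n. A j k * parity_elem \<alpha> k j)"

definition supported_on :: "nat \<Rightarrow> (nat \<Rightarrow> nat \<Rightarrow> complex) \<Rightarrow> bool" where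
  "supported_on n A \<longleftrightarrow> (\<forall>j k. (n < j \<or> n < k) \<longrightarrow> A j k = 0)"

definition quasi_state_on :: "nat \<Rightarrow> (nat \<Rightarrow> nat \<Rightarrow> complex) \<Rightarrow> bool" where
  "quasi_state_on n A \<longleftrightarrow> supported_on n A \<and> (\<forall>j k. A j k = cnj (A k j))
      \<and> (\<Sum>k\<le>n. A k k) = 1"

definition Aplus :: "nat \<Rightarrow> (nat \<Rightarrow> nat \<Rightarrow> complex) set" where
  "Aplus n = {A. quasi_state_on n A \<and> (\<forall>\<alpha>. 0 \<le> wigner n A \<alpha>)}"

definition Aoplus :: "nat \<Rightarrow> (nat \<Rightarrow> nat \<Rightarrow> complex) set" where
  "Aoplus n = {A \<in> Aplus n. \<forall>j k. j \<noteq> k \<longrightarrow> A j k = 0}"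

definition extr :: "(nat \<Rightarrow> nat \<Rightarrow> complex) set \<Rightarrow> (nat \<Rightarrow> nat \<Rightarrow> complex) set" where
  "extr C = {a \<in> C. \<forall>x\<in>C. \<forall>y\<in>C. a = (\<lambda>j k. (x j k + y j k) / 2) \<longrightarrow> x = a \<and> y = a}"

end

theory Submission
  imports Defs "HOL-Computational_Algebra.Polynomial"
begin

definition Ec :: "complex \<Rightarrow> nat \<Rightarrow> nat \<Rightarrow> complex" where
  "Ec b k l = (\<Sum>i\<le>min k l. b ^ (k - i) * (- cnj b) ^ (l - i) /
       complex_of_real (fact i * fact (k - i) * fact (l - i)))"

definition Gt :: "complex \<Rightarrow> nat \<Rightarrow> nat \<Rightarrow> nat \<Rightarrow> complex" where
  "Gt b k l i = (if i \<le> k \<and> i \<le> l then b ^ (k - i) * (- cnj b) ^ (l - i) /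
       complex_of_real (fact i * fact (k - i) * fact (l - i)) else 0)"

lemma Ec_Gt: assumes "min k l \<le> K" shows "Ec b k l = (\<Sum>i\<le>K. Gt b k l i)"
proof -
  have "Ec b k l = (\<Sum>i\<le>min k l. Gt b k l i)"
    unfolding Ec_def Gt_def by (rule sum.cong) auto
  also have "\<dots> = (\<Sum>i\<le>K. Gt b k l i)"
    by (rule sum.mono_neutral_left) (use assms in \<open>auto simp: Gt_def\<close>)
  finally show ?thesis .
qed

lemma disp_Ec: "disp_elem b m k =
   complex_of_real (exp (- (cmod b)\<^sup>2 / 2) * sqrt (fact m * fact k)) * Ec b m k"
  unfolding disp_elem_def Ec_def
  by (simp add: sum_distrib_left field_simps)

lemma Gt_rec:
  assumes "l \<ge> 1"
  shows "of_nat (Suc k) * Gt b (Suc k) l i = b * Gt b k l i +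
     (if i = 0 then 0 else Gt b k (l - 1) (i - 1))"
proof (cases "i \<le> Suc k \<and> i \<le> l")
  case False
  then show ?thesis using assms by (auto simp: Gt_def)
next
  case True
  define a where "a = Suc k - i"
  define c where "c = l - i"
  have ka: "Suc k = i + a" and lc: "l = i + c" using True by (auto simp: a_def c_def)
  show ?thesis
  proof (cases i)
    case 0
    then show ?thesis using ka lc
      by (auto simp: Gt_def field_simps)
  next
    case (Suc i')
    show ?thesis
    proof (cases a)
      case 0
      then have "k = i'" "l = Suc (c + i')" using ka lc Suc by auto
      moreover have "(fact c * fact i' + fact c * (fact i' * complex_of_nat i')) \<noteq> 0"
      proof -
        have "(fact c * fact i' + fact c * (fact i' * complex_of_nat i')) = 
          of_real (fact c * fact i' * (1 + real i'))" by (simp add: algebra_simps)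
        also have "\<dots> \<noteq> 0" by (simp del: of_real_mult)
        finally show ?thesis .
      qed
      ultimately show ?thesis using Suc \<open>a = 0\<close> \<open>i = Suc i'\<close>
        by (auto simp: Gt_def field_simps)
    next
      case (Suc a')
      define w where "w = b ^ a' * (- cnj b) ^ c / complex_of_real (fact i' * fact a' * fact c)"
      have k: "k = Suc (a' + i')" and l: "l = Suc (c + i')" using ka lc Suc \<open>i = Suc i'\<close> by auto
      have e1: "Gt b (Suc k) l i = b * w / (of_nat (Suc i') * of_nat (Suc a'))"
        unfolding Gt_def w_def k l \<open>i = Suc i'\<close> by (simp add: field_simps)
      have e2: "Gt b k l i = w / of_nat (Suc i')"
        unfolding Gt_def w_def k l \<open>i = Suc i'\<close> by (simp add: field_simps)
      have e3: "Gt b k (l - 1) (i - 1) = b * w / of_nat (Suc a')"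
        unfolding Gt_def w_def k l \<open>i = Suc i'\<close> by (simp add: field_simps)
      have "of_nat (Suc k) = (of_nat (Suc i') + of_nat (Suc a') :: complex)" using k by simp
      then have "of_nat (Suc k) * Gt b (Suc k) l i = (of_nat (Suc i') + of_nat (Suc a')) *
          (b * w / (of_nat (Suc i') * of_nat (Suc a')))" using e1 by simp
      also have "\<dots> = b * (w / of_nat (Suc i')) + b * w / of_nat (Suc a')"
        by (simp add: field_simps del: of_nat_Suc)
      finally show ?thesis using e2 e3 \<open>i = Suc i'\<close> by simp
    qed
  qed
qed

lemma Ec_rec1:
  "of_nat (Suc k) * Ec b (Suc k) l = (if l = 0 then 0 else Ec b k (l - 1)) + b * Ec b k l"
proof (cases "l = 0")
  case True
  then show ?thesis unfolding Ec_def by (simp add: field_simps del: of_nat_Suc)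
next
  case False
  define K' where "K' = k + l"
  have "of_nat (Suc k) * Ec b (Suc k) l = of_nat (Suc k) * (\<Sum>i\<le>Suc K'. Gt b (Suc k) l i)"
    by (subst Ec_Gt[where K = "Suc K'"]) (auto simp: K'_def)
  also have "\<dots> = (\<Sum>i\<le>Suc K'. b * Gt b k l i + (if i = 0 then 0 else Gt b k (l - 1) (i - 1)))"
    unfolding sum_distrib_left using False Gt_rec[of l k b] by (intro sum.cong) (auto simp del: of_nat_Suc)
  also have "\<dots> = b * (\<Sum>i\<le>Suc K'. Gt b k l i) + (\<Sum>i\<le>K'. Gt b k (l - 1) i)"
    by (simp add: sum.distrib sum_distrib_left sum.atMost_Suc_shift distrib_left del: sum.atMost_Suc)
  also have "\<dots> = b * Ec b k l + Ec b k (l - 1)"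
    by (subst Ec_Gt[where K = "Suc K'"], simp add: K'_def, subst Ec_Gt[where K = "K'"]) (auto simp: K'_def)
  finally show ?thesis using False by simp
qed

lemma Ec_swap: "Ec b k l = Ec (- cnj b) l k"
  unfolding Ec_def by (simp add: min.commute mult.commute mult.left_commute)

lemma Ec_rec2:
  "of_nat (Suc l) * Ec b k (Suc l) = (if k = 0 then 0 else Ec b (k - 1) l) - cnj b * Ec b k l"
  using Ec_rec1[of l "- cnj b" k] by (simp add: Ec_swap[symmetric])

lemma Ec_0l: "Ec b 0 l = (- cnj b) ^ l / of_real (fact l)"
  unfolding Ec_def by simp

lemma Ec_l0: "Ec b l 0 = b ^ l / of_real (fact l)"
  unfolding Ec_def by simp

lemma S0_sums:
  "(\<lambda>l. (- cnj a) ^ l * Ec a l k) sums (of_real (exp (- (cmod a)\<^sup>2)) * Ec (2 * a) 0 k)"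
proof (induction k)
  case 0
  have "(\<lambda>n. (of_real (- (cmod a)\<^sup>2)) ^ n /\<^sub>R fact n) sums exp (of_real (- (cmod a)\<^sup>2) :: complex)"
    by (rule exp_converges)
  moreover have "\<And>n. (of_real (- (cmod a)\<^sup>2) :: complex) ^ n /\<^sub>R fact n = (- cnj a) ^ n * Ec a n 0"
  proof -
    fix n
    have "(of_real (- (cmod a)\<^sup>2) :: complex) = a * (- cnj a)"
      using complex_norm_square[of a] by (simp del: of_real_power)
    then show "(of_real (- (cmod a)\<^sup>2) :: complex) ^ n /\<^sub>R fact n = (- cnj a) ^ n * Ec a n 0"
      by (simp only: Ec_l0 scaleR_conv_of_real power_mult_distrib) (simp add: field_simps)
  qed
  ultimately show ?case by (simp add: Ec_0l exp_of_real[symmetric])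
next
  case (Suc k)
  define f where "f l = (- cnj a) ^ l * Ec a l k" for l
  define S where "S = of_real (exp (- (cmod a)\<^sup>2)) * Ec (2 * a) 0 k"
  have fS: "f sums S" using Suc unfolding f_def S_def .
  define \<phi> where "\<phi> l = (if l = 0 then 0 else (- cnj a) * f (l - 1))" for l
  have "(\<lambda>l. \<phi> (Suc l)) sums ((- cnj a) * S)" unfolding \<phi>_def using sums_mult[OF fS, of "- cnj a"] by simp
  then have \<phi>S: "\<phi> sums ((- cnj a) * S)" by (subst (asm) sums_Suc_iff) (simp add: \<phi>_def)
  have "(\<lambda>l. \<phi> l + (- cnj a) * f l) sums ((- cnj a) * S + (- cnj a) * S)"
    by (intro sums_add \<phi>S sums_mult fS)
  moreover have "\<And>l. \<phi> l + (- cnj a) * f l = of_nat (Suc k) * ((- cnj a) ^ l * Ec a l (Suc k))"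
  proof -
    fix l
    show "\<phi> l + (- cnj a) * f l = of_nat (Suc k) * ((- cnj a) ^ l * Ec a l (Suc k))"
    proof (cases l)
      case 0
      then show ?thesis unfolding \<phi>_def f_def using Ec_rec2[of k a 0] by (simp add: algebra_simps)
    next
      case (Suc l')
      have r: "of_nat (Suc k) * Ec a l (Suc k) = Ec a l' k - cnj a * Ec a l k"
        using Ec_rec2[of k a l] Suc by simp
      have "of_nat (Suc k) * ((- cnj a) ^ l * Ec a l (Suc k)) = (- cnj a) ^ l * (of_nat (Suc k) * Ec a l (Suc k))"
        by (simp only: mult_ac)
      also have "\<dots> = (- cnj a) ^ l * (Ec a l' k - cnj a * Ec a l k)" by (simp only: r)
      finally show ?thesis unfolding \<phi>_def f_def using Suc by (simp add: algebra_simps)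
    qed
  qed
  ultimately have "(\<lambda>l. of_nat (Suc k) * ((- cnj a) ^ l * Ec a l (Suc k))) sums (2 * (- cnj a) * S)"
    by (simp add: algebra_simps)
  from sums_mult[OF this, of "1 / of_nat (Suc k)"]
  have "(\<lambda>l. (- cnj a) ^ l * Ec a l (Suc k)) sums (2 * (- cnj a) * S / of_nat (Suc k))"
    by (simp del: of_nat_Suc)
  moreover have "2 * (- cnj a) * S / of_nat (Suc k) = of_real (exp (- (cmod a)\<^sup>2)) * Ec (2 * a) 0 (Suc k)"
    unfolding S_def Ec_0l by (simp add: field_simps del: of_nat_Suc)
  ultimately show ?case by simp
qed

lemma S_sums:
  "(\<lambda>l. of_real (fact l) * Ec a m l * Ec a l k) sums (of_real (exp (- (cmod a)\<^sup>2)) * Ec (2 * a) m k)"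
proof (induction m arbitrary: k)
  case 0
  have "(\<lambda>l. of_real (fact l) * Ec a 0 l * Ec a l k) = (\<lambda>l. (- cnj a) ^ l * Ec a l k)"
    by (simp add: Ec_0l)
  then show ?case using S0_sums by simp
next
  case (Suc m)
  define C where "C = (of_real (exp (- (cmod a)\<^sup>2)) :: complex)"
  define F where "F m k l = of_real (fact l) * Ec a m l * Ec a l k" for m k l
  have IH: "F m k' sums (C * Ec (2 * a) m k')" for k' using Suc.IH unfolding F_def C_def .
  define T where "T = (if k = 0 then 0 else C * Ec (2 * a) m (k - 1))"
  have T: "(\<lambda>l. if k = 0 then 0 else F m (k - 1) l) sums T"
    by (cases "k = 0") (auto simp: T_def IH)
  define \<psi> where "\<psi> l = (if l = 0 then 0 else of_real (fact l) * Ec a m (l - 1) * Ec a l k)" for l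
  have \<psi>S: "\<psi> (Suc l) = (if k = 0 then 0 else F m (k - 1) l) + a * F m k l" for l
  proof -
    have "\<psi> (Suc l) = of_real (fact l) * Ec a m l * (of_nat (Suc l) * Ec a (Suc l) k)"
      unfolding \<psi>_def by (simp add: algebra_simps)
    also have "\<dots> = of_real (fact l) * Ec a m l * ((if k = 0 then 0 else Ec a l (k - 1)) + a * Ec a l k)"
      by (simp only: Ec_rec1)
    finally show ?thesis unfolding F_def by (simp add: algebra_simps)
  qed
  have "(\<lambda>l. \<psi> (Suc l)) sums (T + a * (C * Ec (2 * a) m k))"
    unfolding \<psi>S by (intro sums_add T sums_mult IH)
  then have \<psi>sum: "\<psi> sums (T + a * (C * Ec (2 * a) m k))"
    by (subst (asm) sums_Suc_iff) (simp add: \<psi>_def)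
  have "(\<lambda>l. \<psi> l + a * F m k l) sums ((T + a * (C * Ec (2 * a) m k)) + a * (C * Ec (2 * a) m k))"
    by (intro sums_add \<psi>sum sums_mult IH)
  moreover have "\<psi> l + a * F m k l = of_nat (Suc m) * F (Suc m) k l" for l
  proof -
    have "of_nat (Suc m) * F (Suc m) k l = of_real (fact l) * (of_nat (Suc m) * Ec a (Suc m) l) * Ec a l k"
      unfolding F_def by (simp only: mult_ac)
    also have "\<dots> = of_real (fact l) * ((if l = 0 then 0 else Ec a m (l - 1)) + a * Ec a m l) * Ec a l k"
      by (simp only: Ec_rec1)
    finally show ?thesis unfolding F_def \<psi>_def by (simp add: algebra_simps)
  qed
  moreover have "(T + a * (C * Ec (2 * a) m k)) + a * (C * Ec (2 * a) m k) =
      of_nat (Suc m) * (C * Ec (2 * a) (Suc m) k)"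
  proof -
    have "of_nat (Suc m) * (C * Ec (2 * a) (Suc m) k) = C * (of_nat (Suc m) * Ec (2 * a) (Suc m) k)"
      by (simp only: mult_ac)
    also have "\<dots> = C * ((if k = 0 then 0 else Ec (2 * a) m (k - 1)) + 2 * a * Ec (2 * a) m k)"
      by (simp only: Ec_rec1)
    finally show ?thesis unfolding T_def by (simp add: algebra_simps)
  qed
  ultimately have "(\<lambda>l. of_nat (Suc m) * F (Suc m) k l) sums (of_nat (Suc m) * (C * Ec (2 * a) (Suc m) k))"
    by simp
  from sums_mult[OF this, of "1 / of_nat (Suc m)"]
  have "F (Suc m) k sums (C * Ec (2 * a) (Suc m) k)"
    by (simp del: of_nat_Suc)
  then show ?case unfolding F_def C_def .
qed

lemma sign_aux: "i \<le> k \<Longrightarrow> i \<le> l \<Longrightarrow> (-1::complex) ^ (k - i) * (-1) ^ (l - i) = (-1) ^ (k + l)"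
proof -
  assume "i \<le> k" "i \<le> l"
  then have "k = i + (k - i)" "l = i + (l - i)" by auto
  then obtain p q where "k = i + p" "l = i + q" by blast
  then show ?thesis by (simp add: power_add mult_ac power_mult_distrib flip: power_mult)
qed

lemma Ec_cnj: "cnj (Ec b k l) = (-1) ^ (k + l) * Ec b l k"
proof -
  have t: "cnj (b ^ (k - i) * (- cnj b) ^ (l - i) / of_real (fact i * fact (k - i) * fact (l - i))) =
     (-1) ^ (k + l) * (b ^ (l - i) * (- cnj b) ^ (k - i) / of_real (fact i * fact (l - i) * fact (k - i)))"
    if "i \<in> {..min k l}" for i
  proof -
    from that have ik: "i \<le> k" "i \<le> l" by auto
    have "cnj b ^ (k - i) = (-1) ^ (k - i) * (- cnj b) ^ (k - i)"
      by (simp add: power_mult_distrib[symmetric])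
    moreover have "(- b) ^ (l - i) = (-1) ^ (l - i) * b ^ (l - i)"
      by (simp add: power_mult_distrib[symmetric])
    ultimately show ?thesis
      using sign_aux[OF ik] by (simp add: field_simps)
  qed
  have "cnj (Ec b k l) = (\<Sum>i\<le>min k l. cnj (b ^ (k - i) * (- cnj b) ^ (l - i) / of_real (fact i * fact (k - i) * fact (l - i))))"
    unfolding Ec_def cnj_sum ..
  also have "\<dots> = (\<Sum>i\<le>min l k. (-1) ^ (k + l) * (b ^ (l - i) * (- cnj b) ^ (k - i) / of_real (fact i * fact (l - i) * fact (k - i))))"
    using t by (simp add: min.commute)
  also have "\<dots> = (-1) ^ (k + l) * Ec b l k"
    unfolding Ec_def sum_distrib_left ..
  finally show ?thesis .
qed

lemma parity_formula:
  "parity_elem a m k = of_real ((-1) ^ k * exp (- 2 * (cmod a)\<^sup>2) * sqrt (fact m * fact k)) * Ec (2 * a) m k"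
proof -
  define e where "e = exp (- (cmod a)\<^sup>2 / 2)"
  define K where "K = (of_real (e * e * sqrt (fact m * fact k) * (-1) ^ k) :: complex)"
  have trm: "disp_elem a m l * (-1) ^ l * cnj (disp_elem a k l) =
      K * (of_real (fact l) * Ec a m l * Ec a l k)" for l
  proof -
    have s: "sqrt (fact m * fact l) * sqrt (fact k * fact l) = sqrt (fact m * fact k) * (fact l :: real)"
      by (simp add: real_sqrt_mult)
    have sg: "(-1 :: complex) ^ l * (-1) ^ (k + l) = (-1) ^ k"
      by (simp add: power_add mult_ac flip: power_mult_distrib)
    have "disp_elem a m l * (-1) ^ l * cnj (disp_elem a k l) =
       of_real (e * sqrt (fact m * fact l)) * of_real (e * sqrt (fact k * fact l)) *
       (Ec a m l * ((-1) ^ l * (-1) ^ (k + l)) * Ec a l k)"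
      unfolding disp_Ec e_def by (simp add: Ec_cnj mult_ac)
    also have "\<dots> = K * (of_real (fact l) * Ec a m l * Ec a l k)"
    proof -
      have s2: "complex_of_real (e * sqrt (fact m * fact l)) * complex_of_real (e * sqrt (fact k * fact l))
         = of_real (e * e * sqrt (fact m * fact k)) * of_real (fact l)"
        unfolding of_real_mult[symmetric] by (metis s mult_ac)
      show ?thesis unfolding sg K_def s2 by (simp add: mult_ac)
    qed
    finally show ?thesis .
  qed
  have "(\<lambda>l. disp_elem a m l * (-1) ^ l * cnj (disp_elem a k l)) sums
      (K * (of_real (exp (- (cmod a)\<^sup>2)) * Ec (2 * a) m k))"
    unfolding trm by (intro sums_mult S_sums)
  then have "parity_elem a m k = K * (of_real (exp (- (cmod a)\<^sup>2)) * Ec (2 * a) m k)"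
    unfolding parity_elem_def by (simp add: sums_iff)
  moreover have "e * e = exp (- (cmod a)\<^sup>2)"
    unfolding e_def by (simp flip: exp_add)
  moreover have "exp (- (cmod a)\<^sup>2) * exp (- (cmod a)\<^sup>2) = exp (- 2 * (cmod a)\<^sup>2)"
    by (simp flip: exp_add)
  ultimately show ?thesis unfolding K_def
    by (simp add: mult_ac flip: of_real_mult)
qed

lemma Ec_rot:
  assumes "cmod w = 1"
  shows "Ec (w * b) m k = w ^ m * cnj w ^ k * Ec b m k"
proof -
  have wc: "w * cnj w = 1" using assms complex_norm_square[of w] by simp
  have t: "w ^ (m - i) * cnj w ^ (k - i) = w ^ m * cnj w ^ k" if "i \<le> m" "i \<le> k" for i
  proof -
    have "m = i + (m - i)" "k = i + (k - i)" using that by auto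
    then obtain p q where "m = i + p" "k = i + q" by blast
    then have "w ^ m * cnj w ^ k = w ^ p * cnj w ^ q * (w ^ i * cnj w ^ i)"
      by (simp only: power_add mult_ac)
    also have "\<dots> = w ^ p * cnj w ^ q" 
      by (simp only: power_mult_distrib[symmetric] wc power_one mult_1_right)
    finally show ?thesis using \<open>m = i + p\<close> \<open>k = i + q\<close> by simp
  qed
  show ?thesis
    unfolding Ec_def sum_distrib_left
  proof (intro sum.cong refl)
    fix i assume "i \<in> {..min m k}"
    then have "i \<le> m" "i \<le> k" by auto
    have e1: "(w * b) ^ (m - i) = w ^ (m - i) * b ^ (m - i)" by (rule power_mult_distrib)
    have e2: "(- cnj (w * b)) ^ (k - i) = cnj w ^ (k - i) * (- cnj b) ^ (k - i)"
      by (simp only: complex_cnj_mult mult_minus_right[symmetric] power_mult_distrib)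
    show "(w * b) ^ (m - i) * (- cnj (w * b)) ^ (k - i) / of_real (fact i * fact (m - i) * fact (k - i)) =
      w ^ m * cnj w ^ k * (b ^ (m - i) * (- cnj b) ^ (k - i) / of_real (fact i * fact (m - i) * fact (k - i)))"
      unfolding e1 e2 t[OF \<open>i \<le> m\<close> \<open>i \<le> k\<close>, symmetric] by (simp only: mult_ac times_divide_eq_right)
  qed
qed

lemma parity_rot:
  assumes "cmod w = 1"
  shows "parity_elem (w * a) m k = w ^ m * cnj w ^ k * parity_elem a m k"
proof -
  have "2 * (w * a) = w * (2 * a)" by simp
  then have "Ec (2 * (w * a)) m k = w ^ m * cnj w ^ k * Ec (2 * a) m k"
    by (simp only: Ec_rot[OF assms])
  moreover have "cmod (w * a) = cmod a" using assms by (simp add: norm_mult)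
  ultimately show ?thesis unfolding parity_formula by (simp only: mult_ac)
qed

lemma parity_herm: "cnj (parity_elem a m k) = parity_elem a k m"
proof -
  have sg: "(-1::complex) ^ k * (-1) ^ (m + k) = (-1) ^ m"
    by (simp add: power_add mult_ac flip: power_mult_distrib)
  have "cnj (parity_elem a m k) = of_real (exp (- 2 * (cmod a)\<^sup>2) * sqrt (fact m * fact k)) *
      ((-1) ^ k * (-1) ^ (m + k)) * Ec (2 * a) k m"
    unfolding parity_formula by (simp add: Ec_cnj mult_ac)
  then show ?thesis unfolding parity_formula sg by (simp add: mult_ac)
qed

definition Mp :: "nat \<Rightarrow> nat \<Rightarrow> real poly" where
  "Mp m j = (\<Sum>i\<le>j. monom ((-1) ^ j * sqrt (fact (j + m) * fact j) * (-4) ^ (j - i) /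
       (fact i * fact (j + m - i) * fact (j - i))) (j - i))"

lemma poly_Mp: "poly (Mp m j) x = (\<Sum>i\<le>j. (-1) ^ j * sqrt (fact (j + m) * fact j) * (-4) ^ (j - i) /
       (fact i * fact (j + m - i) * fact (j - i)) * x ^ (j - i))"
  unfolding Mp_def by (simp add: poly_sum poly_monom)

lemma parity_off:
  "parity_elem a (j + m) j = (2 * a) ^ m * of_real (exp (- 2 * (cmod a)\<^sup>2) * poly (Mp m j) ((cmod a)\<^sup>2))"
proof -
  have aa: "(2 * a) * (- cnj (2 * a)) = of_real (-4 * (cmod a)\<^sup>2)"
    using complex_norm_square[of a] by (simp del: of_real_power)
  have t: "(2 * a) ^ (j + m - i) * (- cnj (2 * a)) ^ (j - i) = (2 * a) ^ m * of_real ((-4) ^ (j - i) * ((cmod a)\<^sup>2) ^ (j - i))"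
    if "i \<le> j" for i
  proof -
    have "j + m - i = m + (j - i)" using that by simp
    then have "(2 * a) ^ (j + m - i) * (- cnj (2 * a)) ^ (j - i) = (2 * a) ^ m * ((2 * a) * (- cnj (2 * a))) ^ (j - i)"
      by (simp only: power_add power_mult_distrib mult_ac)
    then show ?thesis unfolding aa by (simp only: of_real_power[symmetric] power_mult_distrib)
  qed
  have "Ec (2 * a) (j + m) j = (2 * a) ^ m * of_real (\<Sum>i\<le>j. (-4) ^ (j - i) * ((cmod a)\<^sup>2) ^ (j - i) /
       (fact i * fact (j + m - i) * fact (j - i)))"
    unfolding Ec_def of_real_sum sum_distrib_left min_absorb2[OF le_add1]
  proof (intro sum.cong refl)
    fix i assume "i \<in> {..j}"
    then have ij: "i \<le> j" by simp
    show "(2 * a) ^ (j + m - i) * (- cnj (2 * a)) ^ (j - i) / of_real (fact i * fact (j + m - i) * fact (j - i)) =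
      (2 * a) ^ m * of_real ((-4) ^ (j - i) * ((cmod a)\<^sup>2) ^ (j - i) / (fact i * fact (j + m - i) * fact (j - i)))"
      unfolding t[OF ij] of_real_divide by simp
  qed
  then show ?thesis unfolding parity_formula poly_Mp
    by (simp add: sum_distrib_left real_sqrt_mult mult_ac)
qed

lemma sum_atMost_last: "(\<Sum>j\<le>(d::nat). f j) = f d + (\<Sum>j<d. f j)"
proof -
  have "{..d} = insert d {..<d}" by (auto simp: order.order_iff_strict)
  then show ?thesis by simp
qed

lemma tri_coeff:
  fixes B :: "nat \<Rightarrow> 'a::field poly"
  assumes "\<And>j. degree (B j) \<le> j"
  shows "coeff (\<Sum>j\<le>d. smult (c j) (B j)) d = c d * coeff (B d) d"
proof -
  have "coeff (\<Sum>j\<le>d. smult (c j) (B j)) d = (\<Sum>j\<le>d. c j * coeff (B j) d)"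
    by (simp add: coeff_sum)
  also have "\<dots> = c d * coeff (B d) d + (\<Sum>j<d. c j * coeff (B j) d)"
    by (rule sum_atMost_last)
  also have "(\<Sum>j<d. c j * coeff (B j) d) = 0"
  proof (intro sum.neutral ballI)
    fix j assume "j \<in> {..<d}"
    then have "degree (B j) < d" using assms[of j] by simp
    then show "c j * coeff (B j) d = 0" by (simp add: coeff_eq_0)
  qed
  finally show ?thesis by simp
qed

lemma tri_degree:
  fixes B :: "nat \<Rightarrow> 'a::field poly"
  assumes "\<And>j. degree (B j) \<le> j"
  shows "degree (\<Sum>j\<le>d. smult (c j) (B j)) \<le> d"
proof (rule degree_sum_le)
  fix j assume "j \<in> {..d}"
  then show "degree (smult (c j) (B j)) \<le> d"
    using assms[of j] degree_smult_le[of "c j" "B j"] by simp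
qed simp

lemma tri_indep:
  fixes B :: "nat \<Rightarrow> 'a::field poly"
  assumes "\<And>j. degree (B j) \<le> j" "\<And>j. coeff (B j) j \<noteq> 0"
  shows "(\<Sum>j\<le>d. smult (c j) (B j)) = 0 \<Longrightarrow> j \<le> d \<Longrightarrow> c j = 0"
proof (induction d arbitrary: j)
  case 0
  have "smult (c 0) (B 0) = 0" using 0 by simp
  moreover have "B 0 \<noteq> 0" using assms(2)[of 0] by auto
  ultimately show ?case using 0 by simp
next
  case (Suc d)
  have "coeff (\<Sum>j\<le>Suc d. smult (c j) (B j)) (Suc d) = 0" using Suc.prems by simp
  then have cd: "c (Suc d) = 0" using tri_coeff[OF assms(1), of c "Suc d"] assms(2)[of "Suc d"] by simp
  then have "(\<Sum>j\<le>d. smult (c j) (B j)) = 0" using Suc.prems by simp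
  then show ?case using Suc.IH[of j] cd Suc.prems(2) by (cases "j = Suc d") auto
qed

lemma tri_span:
  fixes B :: "nat \<Rightarrow> 'a::field poly"
  assumes "\<And>j. degree (B j) \<le> j" "\<And>j. coeff (B j) j \<noteq> 0"
  shows "degree e \<le> d \<Longrightarrow> \<exists>c. e = (\<Sum>j\<le>d. smult (c j) (B j))"
proof (induction d arbitrary: e)
  case 0
  define c0 where "c0 = coeff e 0 / coeff (B 0) 0"
  have "e = smult c0 (B 0)"
  proof (rule poly_eqI)
    fix n
    show "coeff e n = coeff (smult c0 (B 0)) n"
    proof (cases n)
      case 0
      then show ?thesis using assms(2)[of 0] by (simp add: c0_def)
    next
      case (Suc n')
      then have "coeff e n = 0" "coeff (B 0) n = 0"
        using 0 assms(1)[of 0] by (auto intro!: coeff_eq_0)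
      then show ?thesis by simp
    qed
  qed
  then show ?case by (intro exI[of _ "\<lambda>_. c0"]) simp
next
  case (Suc d)
  define cd where "cd = coeff e (Suc d) / coeff (B (Suc d)) (Suc d)"
  define e' where "e' = e - smult cd (B (Suc d))"
  have "degree e' \<le> d"
  proof (rule degree_le, intro allI impI)
    fix i assume "d < i"
    show "coeff e' i = 0"
    proof (cases "i = Suc d")
      case True
      then show ?thesis using assms(2)[of "Suc d"] by (simp add: e'_def cd_def)
    next
      case False
      then have "Suc d < i" using \<open>d < i\<close> by simp
      then have "coeff e i = 0" "coeff (B (Suc d)) i = 0"
        using Suc.prems assms(1)[of "Suc d"] by (auto intro!: coeff_eq_0)
      then show ?thesis by (simp add: e'_def)
    qed
  qed
  then obtain c' where c': "e' = (\<Sum>j\<le>d. smult (c' j) (B j))" using Suc.IH by blast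
  define c where "c = c'(Suc d := cd)"
  have "(\<Sum>j\<le>Suc d. smult (c j) (B j)) = (\<Sum>j\<le>d. smult (c j) (B j)) + smult cd (B (Suc d))"
    by (simp add: c_def)
  also have "(\<Sum>j\<le>d. smult (c j) (B j)) = (\<Sum>j\<le>d. smult (c' j) (B j))"
    by (intro sum.cong) (auto simp: c_def)
  also have "(\<Sum>j\<le>d. smult (c' j) (B j)) + smult cd (B (Suc d)) = e" 
    using c' unfolding e'_def by (metis diff_add_cancel)
  finally have "(\<Sum>j\<le>Suc d. smult (c j) (B j)) = e" .
  then show ?case by metis
qed

lemma coeff_Mp: "coeff (Mp m j) t = (if t \<le> j then (-1) ^ j * sqrt (fact (j + m) * fact j) * (-4) ^ t /
       (fact (j - t) * fact (m + t) * fact t) else 0)"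
proof -
  have "coeff (Mp m j) t = (\<Sum>i\<le>j. if j - i = t then (-1) ^ j * sqrt (fact (j + m) * fact j) * (-4) ^ (j - i) /
       (fact i * fact (j + m - i) * fact (j - i)) else 0)"
    unfolding Mp_def by (simp add: coeff_sum coeff_monom)
  also have "\<dots> = (\<Sum>i\<le>j. if i = j - t \<and> t \<le> j then (-1) ^ j * sqrt (fact (j + m) * fact j) * (-4) ^ t /
       (fact (j - t) * fact (m + t) * fact t) else 0)"
    by (intro sum.cong refl) auto
  also have "\<dots> = (if t \<le> j then (-1) ^ j * sqrt (fact (j + m) * fact j) * (-4) ^ t /
       (fact (j - t) * fact (m + t) * fact t) else 0)"
    by (cases "t \<le> j") (simp_all add: sum.delta)
  finally show ?thesis .
qed

lemma degree_Mp: "degree (Mp m j) \<le> j"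
  by (rule degree_le) (simp add: coeff_Mp)

lemma lead_Mp: "coeff (Mp m j) j \<noteq> 0"
  by (simp add: coeff_Mp)

lemma poly_upto:
  fixes q :: "'a::comm_semiring_1 poly"
  assumes "degree q \<le> d"
  shows "poly q x = (\<Sum>i\<le>d. coeff q i * x ^ i)"
  unfolding poly_altdef
  by (rule sum.mono_neutral_left) (use assms in \<open>auto simp: coeff_eq_0\<close>)

lemma poly_dom:
  fixes e p :: "real poly"
  assumes de: "degree e \<le> degree p" and p0: "p \<noteq> 0"
  shows "\<exists>R C. \<forall>x\<ge>R. \<bar>poly e x\<bar> \<le> C * \<bar>poly p x\<bar>"
proof -
  define d where "d = degree p"
  define L where "L = \<bar>coeff p d\<bar>"
  have L0: "L > 0" using p0 by (simp add: L_def d_def)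
  define S where "S = (\<Sum>i<d. \<bar>coeff p i\<bar>)"
  define T where "T = (\<Sum>i\<le>d. \<bar>coeff e i\<bar>)"
  define R where "R = max 1 (2 * S / L)"
  show ?thesis
  proof (intro exI allI impI)
    fix x :: real assume xR: "R \<le> x"
    then have x1: "1 \<le> x" unfolding R_def by simp
    have xS: "2 * S / L \<le> x" using xR unfolding R_def by simp
    have "\<bar>poly e x\<bar> = \<bar>\<Sum>i\<le>d. coeff e i * x ^ i\<bar>"
      using poly_upto[of e d x] de by (simp add: d_def)
    also have "\<dots> \<le> (\<Sum>i\<le>d. \<bar>coeff e i\<bar> * x ^ d)"
    proof -
      have "\<bar>\<Sum>i\<le>d. coeff e i * x ^ i\<bar> \<le> (\<Sum>i\<le>d. \<bar>coeff e i * x ^ i\<bar>)" by (rule sum_abs)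
      also have "\<dots> \<le> (\<Sum>i\<le>d. \<bar>coeff e i\<bar> * x ^ d)"
      proof (intro sum_mono)
        fix i assume "i \<in> {..d}"
        then have "x ^ i \<le> x ^ d" using x1 by (intro power_increasing) auto
        moreover have "\<bar>x ^ i\<bar> = x ^ i" using x1 by simp
        ultimately show "\<bar>coeff e i * x ^ i\<bar> \<le> \<bar>coeff e i\<bar> * x ^ d"
          by (simp add: abs_mult mult_left_mono)
      qed
      finally show ?thesis .
    qed
    also have "\<dots> = T * x ^ d" by (simp add: T_def sum_distrib_right)
    finally have eb: "\<bar>poly e x\<bar> \<le> T * x ^ d" .
    have pp: "poly p x = coeff p d * x ^ d + (\<Sum>i<d. coeff p i * x ^ i)"
      using poly_upto[of p d x] by (simp add: d_def sum_atMost_last)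
    have rest: "\<bar>\<Sum>i<d. coeff p i * x ^ i\<bar> \<le> L / 2 * x ^ d"
    proof -
      have "\<bar>\<Sum>i<d. coeff p i * x ^ i\<bar> \<le> (\<Sum>i<d. \<bar>coeff p i\<bar> * x ^ i)"
        using sum_abs[of "\<lambda>i. coeff p i * x ^ i" "{..<d}"] x1 by (simp add: abs_mult)
      moreover have "x * (\<Sum>i<d. \<bar>coeff p i\<bar> * x ^ i) \<le> S * x ^ d"
      proof -
        have "x * (\<Sum>i<d. \<bar>coeff p i\<bar> * x ^ i) = (\<Sum>i<d. \<bar>coeff p i\<bar> * x ^ Suc i)"
          by (simp add: sum_distrib_left mult_ac)
        also have "\<dots> \<le> (\<Sum>i<d. \<bar>coeff p i\<bar> * x ^ d)"
        proof (intro sum_mono mult_left_mono)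
          fix i assume "i \<in> {..<d}"
          then show "x ^ Suc i \<le> x ^ d" using x1 by (intro power_increasing) auto
        qed simp
        finally show ?thesis by (simp add: S_def sum_distrib_right)
      qed
      moreover have "S * x ^ d \<le> (x * L / 2) * x ^ d"
      proof (rule mult_right_mono)
        show "S \<le> x * L / 2" using xS L0 by (simp add: field_simps)
      qed (use x1 in simp)
      ultimately have "x * (\<Sum>i<d. \<bar>coeff p i\<bar> * x ^ i) \<le> x * (L / 2 * x ^ d)"
        by (simp add: mult_ac)
      then have "(\<Sum>i<d. \<bar>coeff p i\<bar> * x ^ i) \<le> L / 2 * x ^ d"
        using x1 by (simp add: mult_le_cancel_left)
      with \<open>\<bar>\<Sum>i<d. coeff p i * x ^ i\<bar> \<le> _\<close> show ?thesis by linarith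
    qed
    have "\<bar>coeff p d * x ^ d\<bar> = L * x ^ d" using x1 by (simp add: L_def abs_mult)
    then have pb: "L / 2 * x ^ d \<le> \<bar>poly p x\<bar>" using pp rest by linarith
    have "T * x ^ d = (2 * T / L) * (L / 2 * x ^ d)" using L0 by (simp add: field_simps)
    also have "\<dots> \<le> (2 * T / L) * \<bar>poly p x\<bar>"
    proof (rule mult_left_mono[OF pb])
      have "T \<ge> 0" unfolding T_def by (intro sum_nonneg) simp
      then show "0 \<le> 2 * T / L" using L0 by simp
    qed
    finally show "\<bar>poly e x\<bar> \<le> (2 * T / L) * \<bar>poly p x\<bar>" using eb by linarith
  qed
qed

lemma poly_perturb:
  fixes p u :: "real poly" and m n :: nat
  assumes m1: "1 \<le> m" and mn: "m \<le> n" and dp: "degree p = n" and du: "degree u \<le> n - m"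
    and u0: "u \<noteq> 0" and pnn: "\<And>x. 0 \<le> x \<Longrightarrow> 0 \<le> poly p x"
    and bd: "\<And>r. 0 \<le> r \<Longrightarrow> (2 * r) ^ m * \<bar>poly u (r\<^sup>2)\<bar> \<le> poly p (r\<^sup>2)"
  shows "\<exists>e K. degree e \<le> n \<and> (\<forall>\<tau>. e \<noteq> smult \<tau> p) \<and> (\<forall>x\<ge>0. \<bar>poly e x\<bar> \<le> K * poly p x)"
proof -
  define h where "h = (m + 1) div 2"
  define e where "e = monom 1 h * u"
  have pe: "poly e x = x ^ h * poly u x" for x by (simp add: e_def poly_monom)
  have hm: "h \<le> m" using m1 by (simp add: h_def)
  have de: "degree e \<le> h + (n - m)"
    using degree_mult_le[of "monom 1 h" u] degree_monom_le[of "1::real" h] du unfolding e_def by linarith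
  then have den: "degree e \<le> n" using hm mn by linarith
  have p0: "p \<noteq> 0" using dp m1 mn by auto
  have bd1: "\<bar>poly e x\<bar> \<le> max 1 (sqrt x) * poly p x" if x0: "0 \<le> x" for x
  proof -
    define r where "r = sqrt x"
    have r0: "0 \<le> r" and xr: "x = r\<^sup>2" using x0 by (auto simp: r_def)
    have "r ^ m * \<bar>poly u x\<bar> \<le> (2 * r) ^ m * \<bar>poly u x\<bar>"
    proof (rule mult_right_mono)
      show "r ^ m \<le> (2 * r) ^ m" using r0 by (intro power_mono) auto
    qed simp
    also have "\<dots> \<le> poly p x" using bd[OF r0] xr by simp
    finally have rm: "r ^ m * \<bar>poly u x\<bar> \<le> poly p x" .
    have "\<bar>poly e x\<bar> = r ^ (2 * h) * \<bar>poly u x\<bar>"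
      unfolding pe xr using r0 by (simp add: abs_mult power_mult[symmetric] mult.commute)
    also have "\<dots> \<le> max 1 r * poly p x"
    proof (cases "even m")
      case True
      then have "2 * h = m" unfolding h_def by presburger
      then have "r ^ (2 * h) * \<bar>poly u x\<bar> \<le> poly p x" using rm by simp
      moreover have "poly p x \<le> max 1 r * poly p x"
        using pnn[OF x0] by (simp add: mult_le_cancel_right1 max_def)
      ultimately show ?thesis by linarith
    next
      case False
      then have "2 * h = Suc m" unfolding h_def by presburger
      then have "r ^ (2 * h) * \<bar>poly u x\<bar> = r * (r ^ m * \<bar>poly u x\<bar>)" by simp
      also have "\<dots> \<le> r * poly p x" using rm r0 by (rule mult_left_mono)
      also have "\<dots> \<le> max 1 r * poly p x" using pnn[OF x0] by (intro mult_right_mono) auto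
      finally show ?thesis .
    qed
    finally show ?thesis by (simp add: r_def)
  qed
  obtain R C where RC: "\<And>x. x \<ge> R \<Longrightarrow> \<bar>poly e x\<bar> \<le> C * \<bar>poly p x\<bar>"
    using poly_dom[of e p] den dp p0 by auto
  define K where "K = max C (max 1 (sqrt R))"
  have bound: "\<forall>x\<ge>0. \<bar>poly e x\<bar> \<le> K * poly p x"
  proof (intro allI impI)
    fix x :: real assume x0: "0 \<le> x"
    show "\<bar>poly e x\<bar> \<le> K * poly p x"
    proof (cases "R \<le> x")
      case True
      then have "\<bar>poly e x\<bar> \<le> C * \<bar>poly p x\<bar>" by (rule RC)
      then have "\<bar>poly e x\<bar> \<le> C * poly p x" using pnn[OF x0] by simp
      also have "\<dots> \<le> K * poly p x" using pnn[OF x0] by (intro mult_right_mono) (auto simp: K_def)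
      finally show ?thesis .
    next
      case False
      have "\<bar>poly e x\<bar> \<le> max 1 (sqrt x) * poly p x" by (rule bd1[OF x0])
      also have "\<dots> \<le> K * poly p x"
      proof (intro mult_right_mono pnn[OF x0])
        have "sqrt x \<le> sqrt R" using False by simp
        then show "max 1 (sqrt x) \<le> K" unfolding K_def by linarith
      qed
      finally show ?thesis .
    qed
  qed
  have nm: "e \<noteq> smult \<tau> p" for \<tau>
  proof
    assume eq: "e = smult \<tau> p"
    have mon0: "monom (1::real) h \<noteq> 0" by simp
    have e0: "e \<noteq> 0" unfolding e_def using u0 mon0 by simp
    then have t0: "\<tau> \<noteq> 0" using eq by auto
    then have "degree e = n" using eq dp by simp
    show False
    proof (cases "m = 1")
      case False
      then have "h < m" using m1 unfolding h_def by linarith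
      then show False using de \<open>degree e = n\<close> mn by linarith
    next
      case True
      then have h1: "h = 1" by (simp add: h_def)
      have "poly u x = 0" if x: "x \<in> {0<..<4 * \<tau>\<^sup>2}" for x
      proof (rule ccontr)
        assume nz: "poly u x \<noteq> 0"
        define r where "r = sqrt x"
        have r0: "0 < r" and xr: "x = r\<^sup>2" using x by (auto simp: r_def)
        have "r < sqrt (4 * \<tau>\<^sup>2)" using x by (simp add: r_def)
        then have rt: "r < 2 * \<bar>\<tau>\<bar>" by (simp add: real_sqrt_mult)
        have "2 * r * \<bar>poly u x\<bar> \<le> poly p x" using bd[of r] r0 xr True by simp
        also have "poly p x = x * poly u x / \<tau>"
          using arg_cong[OF eq, of "\<lambda>q. poly q x"] pe h1 t0 by (simp add: field_simps)
        also have "\<dots> \<le> \<bar>x * poly u x / \<tau>\<bar>" by (rule abs_ge_self)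
        also have "\<dots> = r\<^sup>2 * \<bar>poly u x\<bar> / \<bar>\<tau>\<bar>"
          using xr by (simp add: abs_mult)
        finally have "2 * r * \<bar>poly u x\<bar> * \<bar>\<tau>\<bar> \<le> r\<^sup>2 * \<bar>poly u x\<bar>"
          using t0 by (simp add: field_simps)
        then have "(2 * \<bar>\<tau>\<bar>) * (r * \<bar>poly u x\<bar>) \<le> r * (r * \<bar>poly u x\<bar>)"
          by (simp add: power2_eq_square mult_ac)
        moreover have "0 < r * \<bar>poly u x\<bar>" using r0 nz by simp
        ultimately have "2 * \<bar>\<tau>\<bar> \<le> r" by (rule mult_right_le_imp_le)
        then show False using rt by simp
      qed
      then have "{0<..<4 * \<tau>\<^sup>2} \<subseteq> {x. poly u x = 0}" by blast
      moreover have "infinite {0<..<4 * \<tau>\<^sup>2}" using t0 by simp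
      ultimately have "infinite {x. poly u x = 0}" using finite_subset by blast
      then show False using poly_roots_finite[OF u0] by simp
    qed
  qed
  show ?thesis using den nm bound by blast
qed

definition rho :: "nat \<Rightarrow> nat \<Rightarrow> complex" where
  "rho N s = cis (2 * pi * real s / real N)"

lemma rho_norm [simp]: "cmod (rho N s) = 1"
  by (simp add: rho_def)

lemma rho_term: "rho N s ^ a * cnj (rho N s) ^ b = cis (2 * pi * (real a - real b) / real N) ^ s"
proof -
  have "rho N s ^ a * cnj (rho N s) ^ b = cis (real a * (2 * pi * real s / real N)) * cis (real b * (- (2 * pi * real s / real N)))"
    unfolding rho_def cis_cnj DeMoivre ..
  also have "\<dots> = cis (real s * (2 * pi * (real a - real b) / real N))"
    unfolding cis_mult by (rule arg_cong[where f = cis]) (simp add: divide_inverse algebra_simps)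
  finally show ?thesis unfolding DeMoivre .
qed

lemma orth:
  assumes N: "0 < N" and a: "a < N" and b: "b < N"
  shows "(\<Sum>s<N. rho N s ^ a * cnj (rho N s) ^ b) = (if a = b then of_nat N else 0)"
proof (cases "a = b")
  case True
  then show ?thesis unfolding rho_term by simp
next
  case False
  define z where "z = cis (2 * pi * (real a - real b) / real N)"
  have zN: "z ^ N = 1"
  proof -
    have "z ^ N = cis (2 * pi * real_of_int (int a - int b))"
      unfolding z_def DeMoivre using N by (intro arg_cong[where f = cis]) (simp add: field_simps)
    also have "\<dots> = 1" by (rule cis_multiple_2pi) simp
    finally show ?thesis .
  qed
  have z1: "z \<noteq> 1"
  proof
    assume "z = 1"
    then have "cos (2 * pi * (real a - real b) / real N) = 1"
    proof -
    have "Re z = 1" using \<open>z = 1\<close> by simp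
    then show ?thesis unfolding z_def by simp
  qed
    then obtain t :: int where t: "2 * pi * (real a - real b) / real N = t * 2 * pi"
      by (auto simp: cos_one_2pi_int)
    then have "2 * pi * ((real a - real b) / real N) = 2 * pi * t" by (simp add: algebra_simps)
    moreover have "2 * pi \<noteq> 0" by simp
    ultimately have "(real a - real b) / real N = t" using mult_left_cancel by blast
    then have tN: "real a - real b = t * real N" using N by (simp add: divide_eq_eq)
    have "\<bar>real a - real b\<bar> < real N" using a b by linarith
    then have "\<bar>real_of_int t\<bar> * real N < 1 * real N" using tN by (simp add: abs_mult)
    then have "\<bar>real_of_int t\<bar> < 1" using N by (simp only: mult_less_cancel_right)
    then have "t = 0" by linarith
    then show False using tN False by simp
  qed
  have "(\<Sum>s<N. rho N s ^ a * cnj (rho N s) ^ b) = (\<Sum>s<N. z ^ s)"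
    unfolding rho_term z_def ..
  also have "\<dots> = 0" using geometric_sum[OF z1, of N] zN by simp
  finally show ?thesis using False by simp
qed

definition Zs :: "nat \<Rightarrow> (nat \<Rightarrow> nat \<Rightarrow> complex) \<Rightarrow> complex \<Rightarrow> complex" where
  "Zs n A a = (\<Sum>j\<le>n. \<Sum>k\<le>n. A j k * parity_elem a k j)"

lemma wigner_Zs: "wigner n A a = 2 / pi * Re (Zs n A a)"
  unfolding wigner_def Zs_def ..

lemma avg:
  assumes mn: "m \<le> n"
  shows "(\<Sum>s<Suc (2 * n). cnj (rho (Suc (2 * n)) s) ^ m * Zs n A (rho (Suc (2 * n)) s * a)) =
    of_nat (Suc (2 * n)) * (\<Sum>j\<le>n. if j + m \<le> n then A j (j + m) * parity_elem a (j + m) j else 0)"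
proof -
  define N where "N = Suc (2 * n)"
  have "(\<Sum>s<N. cnj (rho N s) ^ m * Zs n A (rho N s * a)) =
     (\<Sum>s<N. \<Sum>j\<le>n. \<Sum>k\<le>n. A j k * parity_elem a k j * (rho N s ^ k * cnj (rho N s) ^ (j + m)))"
    unfolding Zs_def parity_rot[OF rho_norm] sum_distrib_left
    by (intro sum.cong refl) (simp add: power_add mult_ac)
  also have "\<dots> = (\<Sum>j\<le>n. \<Sum>k\<le>n. A j k * parity_elem a k j * (\<Sum>s<N. rho N s ^ k * cnj (rho N s) ^ (j + m)))"
    unfolding sum_distrib_left
    apply (subst sum.swap[where A = "{..<N}"])
    apply (rule sum.cong[OF refl])
    apply (rule sum.swap)
    done
  also have "\<dots> = (\<Sum>j\<le>n. \<Sum>k\<le>n. A j k * parity_elem a k j * (if k = j + m then of_nat N else 0))"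
  proof (intro sum.cong refl)
    fix j k assume "j \<in> {..n}" "k \<in> {..n}"
    then have "0 < N" "k < N" "j + m < N" using mn by (auto simp: N_def)
    then show "A j k * parity_elem a k j * (\<Sum>s<N. rho N s ^ k * cnj (rho N s) ^ (j + m)) =
       A j k * parity_elem a k j * (if k = j + m then of_nat N else 0)"
      by (simp only: orth)
  qed
  also have "\<dots> = (\<Sum>j\<le>n. of_nat N * (if j + m \<le> n then A j (j + m) * parity_elem a (j + m) j else 0))"
  proof (intro sum.cong refl)
    fix j
    have "(\<Sum>k\<le>n. A j k * parity_elem a k j * (if k = j + m then of_nat N else 0)) =
        (\<Sum>k\<le>n. if k = j + m then A j (j + m) * parity_elem a (j + m) j * of_nat N else 0)"
      by (intro sum.cong refl) simp
    also have "\<dots> = of_nat N * (if j + m \<le> n then A j (j + m) * parity_elem a (j + m) j else 0)"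
      by (simp add: sum.delta)
    finally show "(\<Sum>k\<le>n. A j k * parity_elem a k j * (if k = j + m then of_nat N else 0)) =
        of_nat N * (if j + m \<le> n then A j (j + m) * parity_elem a (j + m) j else 0)" .
  qed
  finally show ?thesis unfolding N_def sum_distrib_left .
qed

definition radp :: "nat \<Rightarrow> (nat \<Rightarrow> nat \<Rightarrow> complex) \<Rightarrow> real poly" where
  "radp n A = (\<Sum>k\<le>n. smult (Re (A k k)) (Mp 0 k))"

lemma parity_diag: "parity_elem a j j = of_real (exp (- 2 * (cmod a)\<^sup>2) * poly (Mp 0 j) ((cmod a)\<^sup>2))"
  using parity_off[of a j 0] by simp

lemma Zs_diag:
  assumes "\<And>j k. j \<noteq> k \<Longrightarrow> A j k = 0"
  shows "Zs n A a = (\<Sum>j\<le>n. A j j * parity_elem a j j)"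
  unfolding Zs_def
proof (intro sum.cong refl)
  fix j assume "j \<in> {..n}"
  have "(\<Sum>k\<le>n. A j k * parity_elem a k j) = (\<Sum>k\<le>n. if k = j then A j j * parity_elem a j j else 0)"
    using assms by (intro sum.cong refl) auto
  also have "\<dots> = A j j * parity_elem a j j" using \<open>j \<in> {..n}\<close> by (simp add: sum.delta)
  finally show "(\<Sum>k\<le>n. A j k * parity_elem a k j) = A j j * parity_elem a j j" .
qed

lemma wigner_diag:
  assumes "\<And>j k. j \<noteq> k \<Longrightarrow> A j k = 0"
  shows "wigner n A a = 2 / pi * exp (- 2 * (cmod a)\<^sup>2) * poly (radp n A) ((cmod a)\<^sup>2)"
proof -
  have z: "Zs n A a = (\<Sum>j\<le>n. A j j * parity_elem a j j)" by (rule Zs_diag[OF assms])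
  have "Re (Zs n A a) = (\<Sum>j\<le>n. Re (A j j) * (exp (- 2 * (cmod a)\<^sup>2) * poly (Mp 0 j) ((cmod a)\<^sup>2)))"
    unfolding z parity_diag Re_sum by simp
  also have "\<dots> = exp (- 2 * (cmod a)\<^sup>2) * poly (radp n A) ((cmod a)\<^sup>2)"
    unfolding radp_def poly_sum by (simp add: sum_distrib_left mult_ac)
  finally show ?thesis unfolding wigner_Zs by simp
qed

lemma Re_Zs_diag:
  assumes "\<And>j k. j \<noteq> k \<Longrightarrow> A j k = 0"
  shows "Re (Zs n A a) = exp (- 2 * (cmod a)\<^sup>2) * poly (radp n A) ((cmod a)\<^sup>2)"
proof -
  have "2 / pi * Re (Zs n A a) = 2 / pi * (exp (- 2 * (cmod a)\<^sup>2) * poly (radp n A) ((cmod a)\<^sup>2))"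
    using wigner_diag[OF assms, where n = n and a = a] unfolding wigner_Zs by simp
  then show ?thesis by simp
qed

lemma Zs_lin: "Zs n (\<lambda>j k. c * A j k + d * B j k) a = c * Zs n A a + d * Zs n B a"
  unfolding Zs_def by (simp add: sum.distrib sum_distrib_left algebra_simps)

lemma Zs_real:
  assumes "\<And>j k. D j k = cnj (D k j)"
  shows "cnj (Zs n D a) = Zs n D a"
proof -
  have "cnj (Zs n D a) = (\<Sum>j\<le>n. \<Sum>k\<le>n. D k j * parity_elem a j k)"
    unfolding Zs_def cnj_sum complex_cnj_mult parity_herm
    by (intro sum.cong refl) (metis assms complex_cnj_cnj)
  also have "\<dots> = Zs n D a" unfolding Zs_def by (rule sum.swap)
  finally show ?thesis .
qed

lemma diag_in:
  assumes X: "X \<in> Aplus n"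
  shows "(\<lambda>j k. if j = k then X j k else 0) \<in> Aoplus n"
proof -
  define D where "D = (\<lambda>j k. if j = k then X j k else 0)"
  have Xq: "quasi_state_on n X" and Xw: "\<And>a. 0 \<le> wigner n X a" using X by (auto simp: Aplus_def)
  have Dd: "\<And>j k. j \<noteq> k \<Longrightarrow> D j k = 0" by (simp add: D_def)
  have qs: "quasi_state_on n D"
  proof -
    have Xs: "supported_on n X" and Xh: "\<And>j k. X j k = cnj (X k j)" and Xt: "(\<Sum>k\<le>n. X k k) = 1"
      using Xq unfolding quasi_state_on_def by blast+
    have "supported_on n D" using Xs unfolding supported_on_def D_def by simp
    moreover have "\<forall>j k. D j k = cnj (D k j)"
    proof (intro allI)
      fix j k show "D j k = cnj (D k j)"
        by (cases "j = k") (simp_all add: D_def Xh[of k k, symmetric])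
    qed
    moreover have "(\<Sum>k\<le>n. D k k) = 1" using Xt unfolding D_def by simp
    ultimately show ?thesis unfolding quasi_state_on_def by blast
  qed
  have "0 \<le> wigner n D a" for a
  proof -
    define N where "N = Suc (2 * n)"
    have "(\<Sum>s<N. cnj (rho N s) ^ 0 * Zs n X (rho N s * a)) =
      of_nat N * (\<Sum>j\<le>n. if j + 0 \<le> n then X j (j + 0) * parity_elem a (j + 0) j else 0)"
      unfolding N_def by (rule avg) simp
    also have "(\<Sum>j\<le>n. if j + 0 \<le> n then X j (j + 0) * parity_elem a (j + 0) j else 0) = Zs n D a"
    proof -
      have z: "Zs n D a = (\<Sum>j\<le>n. D j j * parity_elem a j j)" by (rule Zs_diag[OF Dd])
      show ?thesis unfolding z by (intro sum.cong refl) (simp add: D_def)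
    qed
    finally have "(\<Sum>s<N. Zs n X (rho N s * a)) = of_nat N * Zs n D a" by simp
    then have "Re (\<Sum>s<N. Zs n X (rho N s * a)) = Re (of_nat N * Zs n D a)" by (rule arg_cong)
    then have "(\<Sum>s<N. Re (Zs n X (rho N s * a))) = real N * Re (Zs n D a)"
      by (simp only: Re_sum) simp
    moreover have "0 \<le> (\<Sum>s<N. Re (Zs n X (rho N s * a)))"
    proof (intro sum_nonneg)
      fix s
      have "0 \<le> 2 / pi * Re (Zs n X (rho N s * a))" using Xw unfolding wigner_Zs by simp
      then show "0 \<le> Re (Zs n X (rho N s * a))" using pi_gt_zero by (simp add: zero_le_mult_iff zero_le_divide_iff)
    qed
    ultimately have "0 \<le> Re (Zs n D a)" by (simp add: N_def zero_le_mult_iff)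
    then show ?thesis unfolding wigner_Zs by simp
  qed
  then have "D \<in> Aplus n" using qs unfolding Aplus_def by blast
  then show ?thesis using Dd unfolding Aoplus_def D_def by blast
qed

lemma not_prev:
  assumes A: "A \<in> Aoplus n" and n1: "1 \<le> n" and Ann: "A n n = 0"
  shows "A \<in> Aoplus (n - 1)"
proof -
  have Aq: "quasi_state_on n A" and Aw: "\<And>a. 0 \<le> wigner n A a"
    and Ad: "\<And>j k. j \<noteq> k \<Longrightarrow> A j k = 0" using A by (auto simp: Aoplus_def Aplus_def)
  have nn: "{..n} = insert n {..n - 1}" using n1 by auto
  have sup: "supported_on (n - 1) A"
    unfolding supported_on_def
  proof (intro allI impI)
    fix j k assume "n - 1 < j \<or> n - 1 < k"
    note h = this
    show "A j k = 0"
    proof (cases "j = k")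
      case True
      then have "n \<le> j" using h by linarith
      show ?thesis
      proof (cases "j = n")
        case True
        then show ?thesis using Ann \<open>j = k\<close> by simp
      next
        case False
        then have "n < j" using \<open>n \<le> j\<close> by simp
        then show ?thesis using Aq unfolding quasi_state_on_def supported_on_def by blast
      qed
    next
      case False
      then show ?thesis using Ad by blast
    qed
  qed
  have Ah: "\<forall>j k. A j k = cnj (A k j)" and At: "(\<Sum>k\<le>n. A k k) = 1"
    using Aq unfolding quasi_state_on_def by blast+
  have tr: "(\<Sum>k\<le>n - 1. A k k) = 1"
  proof -
    have "n \<notin> {..n - 1}" using n1 by simp
    then have "(\<Sum>k\<le>n. A k k) = A n n + (\<Sum>k\<le>n - 1. A k k)" unfolding nn by simp
    then show ?thesis using At Ann by simp
  qed
  have zs: "Zs (n - 1) A a = Zs n A a" for a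
  proof -
    have z1: "Zs (n - 1) A a = (\<Sum>j\<le>n - 1. A j j * parity_elem a j j)" by (rule Zs_diag[OF Ad])
    have z2: "Zs n A a = (\<Sum>j\<le>n. A j j * parity_elem a j j)" by (rule Zs_diag[OF Ad])
    have "n \<notin> {..n - 1}" using n1 by simp
    then show ?thesis unfolding z1 z2 nn using Ann by simp
  qed
  have "quasi_state_on (n - 1) A" unfolding quasi_state_on_def using sup Ah tr by blast
  moreover have "\<forall>a. 0 \<le> wigner (n - 1) A a" using Aw unfolding wigner_Zs zs by blast
  ultimately show ?thesis using Ad unfolding Aoplus_def Aplus_def by blast
qed

lemma guarded_sum:
  fixes m n :: nat
  assumes "m \<le> n"
  shows "(\<Sum>j\<le>n. if j + m \<le> n then f j else 0) = (\<Sum>j\<le>n - m. f j)"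
proof -
  have "(\<Sum>j\<le>n. if j + m \<le> n then f j else 0) = (\<Sum>j\<le>n - m. if j + m \<le> n then f j else 0)"
  proof (rule sum.mono_neutral_right)
    show "\<forall>i\<in>{..n} - {..n - m}. (if i + m \<le> n then f i else 0) = 0"
    proof
      fix i assume "i \<in> {..n} - {..n - m}"
      then have "\<not> i \<le> n - m" by simp
      then have "\<not> i + m \<le> n" by linarith
      then show "(if i + m \<le> n then f i else 0) = 0" by simp
    qed
  qed auto
  also have "\<dots> = (\<Sum>j\<le>n - m. f j)" using assms by (intro sum.cong refl) auto
  finally show ?thesis .
qed

lemma Re_mult_of_real: "Re (z * complex_of_real r) = Re z * r"
  by simp

lemma offdiag_bound:
  assumes Ad: "\<And>j k. j \<noteq> k \<Longrightarrow> A j k = 0"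
    and Dh: "\<And>j k. D j k = cnj (D k j)"
    and bnd: "\<And>a. \<bar>Re (Zs n D a)\<bar> \<le> Re (Zs n A a)"
    and mn: "m \<le> n" and r0: "0 \<le> r"
  shows "(2 * r) ^ m * cmod (\<Sum>j\<le>n - m. D j (j + m) * of_real (poly (Mp m j) (r\<^sup>2)))
     \<le> poly (radp n A) (r\<^sup>2)"
proof -
  define N where "N = Suc (2 * n)"
  define a where "a = complex_of_real r"
  define E where "E = exp (- 2 * (cmod a)\<^sup>2)"
  have E0: "E > 0" by (simp add: E_def)
  have ca: "cmod a = r" using r0 by (simp add: a_def)
  define H where "H = (\<Sum>j\<le>n - m. D j (j + m) * of_real (poly (Mp m j) (r\<^sup>2)))"
  have real: "Zs n D b = of_real (Re (Zs n D b))" for b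
  proof -
    have "cnj (Zs n D b) = Zs n D b" by (rule Zs_real[OF Dh])
    then have "Zs n D b \<in> \<real>" by (simp only: Reals_cnj_iff)
    then show ?thesis by (rule of_real_Re[symmetric])
  qed
  have "(\<Sum>s<N. cnj (rho N s) ^ m * Zs n D (rho N s * a)) =
    of_nat N * (\<Sum>j\<le>n. if j + m \<le> n then D j (j + m) * parity_elem a (j + m) j else 0)"
    unfolding N_def by (rule avg[OF mn])
  also have "(\<Sum>j\<le>n. if j + m \<le> n then D j (j + m) * parity_elem a (j + m) j else 0) =
     (\<Sum>j\<le>n - m. D j (j + m) * parity_elem a (j + m) j)"
    by (rule guarded_sum[OF mn])
  also have "\<dots> = (2 * a) ^ m * of_real E * H"
    unfolding parity_off H_def sum_distrib_left E_def ca
    by (intro sum.cong refl) (simp add: mult_ac)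
  finally have avg_eq: "(\<Sum>s<N. cnj (rho N s) ^ m * Zs n D (rho N s * a)) = of_nat N * ((2 * a) ^ m * of_real E * H)" .
  have "cmod (of_nat N * ((2 * a) ^ m * of_real E * H)) \<le> (\<Sum>s<N. cmod (cnj (rho N s) ^ m * Zs n D (rho N s * a)))"
    unfolding avg_eq[symmetric] by (rule norm_sum)
  also have "\<dots> = (\<Sum>s<N. \<bar>Re (Zs n D (rho N s * a))\<bar>)"
  proof (intro sum.cong refl)
    fix s
    have "cmod (cnj (rho N s) ^ m * Zs n D (rho N s * a)) = cmod (Zs n D (rho N s * a))"
      by (simp add: norm_mult norm_power)
    also have "\<dots> = \<bar>Re (Zs n D (rho N s * a))\<bar>" by (subst real) (simp only: norm_of_real)
    finally show "cmod (cnj (rho N s) ^ m * Zs n D (rho N s * a)) = \<bar>Re (Zs n D (rho N s * a))\<bar>" .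
  qed
  also have "\<dots> \<le> (\<Sum>s<N. Re (Zs n A (rho N s * a)))"
    by (intro sum_mono bnd)
  also have "\<dots> = (\<Sum>s<N. E * poly (radp n A) (r\<^sup>2))"
  proof (intro sum.cong refl)
    fix s
    have "cmod (rho N s * a) = r" using ca by (simp add: norm_mult)
    moreover have "Re (Zs n A (rho N s * a)) = exp (- 2 * (cmod (rho N s * a))\<^sup>2) * poly (radp n A) ((cmod (rho N s * a))\<^sup>2)"
      by (rule Re_Zs_diag[OF Ad])
    ultimately show "Re (Zs n A (rho N s * a)) = E * poly (radp n A) (r\<^sup>2)"
      unfolding E_def ca by simp
  qed
  also have "\<dots> = real N * (E * poly (radp n A) (r\<^sup>2))" by simp
  finally have "real N * ((2 * r) ^ m * E * cmod H) \<le> real N * (E * poly (radp n A) (r\<^sup>2))"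
    using r0 E0 by (simp add: norm_mult norm_power a_def abs_mult)
  then have "(2 * r) ^ m * E * cmod H \<le> E * poly (radp n A) (r\<^sup>2)"
    by (simp add: N_def)
  then have "E * ((2 * r) ^ m * cmod H) \<le> E * poly (radp n A) (r\<^sup>2)" by (simp add: mult_ac)
  then show ?thesis using E0 unfolding H_def by simp
qed

lemma poly_radp: "poly (radp n A) x = (\<Sum>k\<le>n. Re (A k k) * poly (Mp 0 k) x)"
  unfolding radp_def by (simp add: poly_sum)

lemma smult_sum_right: "smult c (\<Sum>i\<in>S. f i) = (\<Sum>i\<in>S. smult c (f i))"
  by (induction S rule: infinite_finite_induct) (auto simp: smult_add_right)

lemma perturb_contra:
  assumes Aext: "A \<in> extr (Aoplus n)"
    and eb: "e = (\<Sum>k\<le>n. smult (b k) (Mp 0 k))"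
    and nm: "\<forall>\<tau>. e \<noteq> smult \<tau> (radp n A)"
    and bound: "\<forall>x\<ge>0. \<bar>poly e x\<bar> \<le> K * poly (radp n A) x"
    and pnn: "\<forall>x\<ge>0. 0 \<le> poly (radp n A) x"
  shows False
proof -
  have AO: "A \<in> Aoplus n" using Aext by (simp add: extr_def)
  have Aq: "quasi_state_on n A" and Ad: "\<And>j k. j \<noteq> k \<Longrightarrow> A j k = 0"
    using AO unfolding Aoplus_def Aplus_def by blast+
  have As: "supported_on n A" and Ah: "\<And>j k. A j k = cnj (A k j)" and At: "(\<Sum>k\<le>n. A k k) = 1"
    using Aq unfolding quasi_state_on_def by blast+
  define p where "p = radp n A"
  define \<tau> where "\<tau> = (\<Sum>k\<le>n. b k)"
  define K' where "K' = \<bar>K\<bar>"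
  define \<epsilon> where "\<epsilon> = 1 / (1 + K' + \<bar>\<tau>\<bar>)"
  have K'0: "0 \<le> K'" by (simp add: K'_def)
  have eps0: "0 < \<epsilon>" using K'0 by (simp add: \<epsilon>_def add_pos_nonneg)
  have epsb: "\<epsilon> * (K' + \<bar>\<tau>\<bar>) \<le> 1" using K'0 by (simp add: \<epsilon>_def field_simps)
  define B where "B j k = (if j = k \<and> j \<le> n then complex_of_real (b j - \<tau> * Re (A j j)) else 0)" for j k
  define At' where "At' t = (\<lambda>j k. A j k + complex_of_real t * B j k)" for t
  have ReA: "(\<Sum>k\<le>n. Re (A k k)) = 1" using At by (metis Re_sum one_complex.sel(1))
  have inA: "At' t \<in> Aoplus n" if t: "\<bar>t\<bar> \<le> \<epsilon>" for t
  proof -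
    have sup: "supported_on n (At' t)"
      using As unfolding supported_on_def At'_def B_def by auto
    have herm: "\<forall>j k. At' t j k = cnj (At' t k j)"
    proof (intro allI)
      fix j k
      have "B j k = cnj (B k j)" unfolding B_def by auto
      then show "At' t j k = cnj (At' t k j)" unfolding At'_def using Ah[of j k] by simp
    qed
    have tr: "(\<Sum>k\<le>n. At' t k k) = 1"
    proof -
      have "(\<Sum>k\<le>n. At' t k k) = (\<Sum>k\<le>n. A k k) + of_real t * of_real (\<Sum>k\<le>n. (b k - \<tau> * Re (A k k)))"
        unfolding At'_def B_def by (simp add: sum.distrib sum_distrib_left)
      also have "(\<Sum>k\<le>n. (b k - \<tau> * Re (A k k))) = 0"
        by (simp add: sum_subtractf sum_distrib_left[symmetric] ReA \<tau>_def)
      finally show ?thesis using At by simp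
    qed
    have dg: "\<And>j k. j \<noteq> k \<Longrightarrow> At' t j k = 0" unfolding At'_def B_def using Ad by simp
    have wig: "0 \<le> wigner n (At' t) a" for a
    proof -
      define x where "x = (cmod a)\<^sup>2"
      have x0: "0 \<le> x" by (simp add: x_def)
      have "poly (radp n (At' t)) x = (\<Sum>k\<le>n. (Re (A k k) + t * (b k - \<tau> * Re (A k k))) * poly (Mp 0 k) x)"
        unfolding poly_radp by (intro sum.cong refl) (simp add: At'_def B_def)
      also have "\<dots> = poly p x + t * (poly e x - \<tau> * poly p x)"
        unfolding p_def poly_radp eb poly_sum poly_smult
        by (simp add: algebra_simps sum.distrib sum_distrib_left sum_subtractf)
      finally have pr: "poly (radp n (At' t)) x = poly p x + t * (poly e x - \<tau> * poly p x)" .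
      have pp: "0 \<le> poly p x" using pnn x0 by (simp add: p_def)
      have "\<bar>t * (poly e x - \<tau> * poly p x)\<bar> \<le> \<epsilon> * (K' * poly p x + \<bar>\<tau>\<bar> * poly p x)"
      proof -
        have "\<bar>poly e x\<bar> \<le> K' * poly p x"
          using bound x0 pp unfolding p_def K'_def
          by (meson abs_ge_self dual_order.trans mult_right_mono)
        then have "\<bar>poly e x - \<tau> * poly p x\<bar> \<le> K' * poly p x + \<bar>\<tau>\<bar> * poly p x"
        proof -
          have "\<bar>\<tau> * poly p x\<bar> = \<bar>\<tau>\<bar> * poly p x" using pp by (simp add: abs_mult)
          moreover have "\<bar>poly e x - \<tau> * poly p x\<bar> \<le> \<bar>poly e x\<bar> + \<bar>\<tau> * poly p x\<bar>"
            by (rule abs_triangle_ineq4)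
          ultimately show ?thesis using \<open>\<bar>poly e x\<bar> \<le> K' * poly p x\<close> by linarith
        qed
        then show ?thesis using t by (simp add: abs_mult mult_mono')
      qed
      also have "\<dots> = (\<epsilon> * (K' + \<bar>\<tau>\<bar>)) * poly p x" by (simp add: algebra_simps)
      also have "\<dots> \<le> poly p x" using mult_left_le[OF epsb pp] by (simp add: mult.commute)
      finally have "0 \<le> poly (radp n (At' t)) x" unfolding pr by linarith
      moreover have "wigner n (At' t) a = 2 / pi * exp (- 2 * (cmod a)\<^sup>2) * poly (radp n (At' t)) ((cmod a)\<^sup>2)"
        by (rule wigner_diag[OF dg])
      ultimately show ?thesis unfolding x_def by simp
    qed
    show ?thesis unfolding Aoplus_def Aplus_def quasi_state_on_def
      using sup herm tr dg wig by blast
  qed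
  have "A = (\<lambda>j k. (At' \<epsilon> j k + At' (- \<epsilon>) j k) / 2)"
    unfolding At'_def by (simp add: fun_eq_iff)
  note midA = this
  have in1: "At' \<epsilon> \<in> Aoplus n" using inA eps0 by simp
  have in2: "At' (- \<epsilon>) \<in> Aoplus n" using inA eps0 by simp
  have ext: "\<forall>x\<in>Aoplus n. \<forall>y\<in>Aoplus n. A = (\<lambda>j k. (x j k + y j k) / 2) \<longrightarrow> x = A \<and> y = A"
    using Aext unfolding extr_def by blast
  have "At' \<epsilon> = A" using ext[rule_format, OF in1 in2 midA] by (rule conjunct1)
  have B0: "B k k = 0" for k
  proof -
    have "At' \<epsilon> k k = A k k" using \<open>At' \<epsilon> = A\<close> by simp
    then have "complex_of_real \<epsilon> * B k k = 0" unfolding At'_def by simp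
    then show ?thesis using eps0 by simp
  qed
  have "e = smult \<tau> (radp n A)"
    unfolding eb radp_def smult_sum_right
  proof (intro sum.cong refl)
    fix k assume "k \<in> {..n}"
    then have "complex_of_real (b k - \<tau> * Re (A k k)) = 0" using B0[of k] by (simp add: B_def del: of_real_diff of_real_mult)
    then have "b k = \<tau> * Re (A k k)" by (simp only: of_real_eq_0_iff)
    then show "smult (b k) (Mp 0 k) = smult \<tau> (smult (Re (A k k)) (Mp 0 k))" by simp
  qed
  then show False using nm by blast
qed

lemma key:
  fixes n :: nat and A X Y :: "nat \<Rightarrow> nat \<Rightarrow> complex"
  assumes n1: "1 \<le> n" and Aext: "A \<in> extr (Aoplus n)" and Ann: "A n n \<noteq> 0"
    and X: "X \<in> Aplus n" and Y: "Y \<in> Aplus n" and mid: "A = (\<lambda>j k. (X j k + Y j k) / 2)"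
    and Xd: "\<And>j. X j j = A j j"
  shows "X = A"
proof (rule ccontr)
  assume XA: "X \<noteq> A"
  have AO: "A \<in> Aoplus n" using Aext by (simp add: extr_def)
  have Aq: "quasi_state_on n A" and Aw: "\<And>a. 0 \<le> wigner n A a" and Ad: "\<And>j k. j \<noteq> k \<Longrightarrow> A j k = 0"
    using AO unfolding Aoplus_def Aplus_def by blast+
  have As: "supported_on n A" and Ah: "\<And>j k. A j k = cnj (A k j)"
    using Aq unfolding quasi_state_on_def by blast+
  have Xq: "quasi_state_on n X" and Xw: "\<And>a. 0 \<le> wigner n X a"
    using X unfolding Aplus_def by blast+
  have Xs: "supported_on n X" and Xh: "\<And>j k. X j k = cnj (X k j)"
    using Xq unfolding quasi_state_on_def by blast+
  have Yw: "\<And>a. 0 \<le> wigner n Y a" using Y unfolding Aplus_def by blast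
  have Ydef: "Y j k = 2 * A j k - X j k" for j k
  proof -
    have "A j k = (X j k + Y j k) / 2" using mid by simp
    then show ?thesis by (simp add: field_simps)
  qed
  define Dl where "Dl j k = X j k - A j k" for j k
  have Dh: "Dl j k = cnj (Dl k j)" for j k
  proof -
    have "cnj (Dl k j) = cnj (X k j) - cnj (A k j)" by (simp add: Dl_def)
    also have "\<dots> = X j k - A j k" using Xh[of j k] Ah[of j k] by simp
    finally show ?thesis by (simp add: Dl_def)
  qed
  have Dd: "Dl j j = 0" for j by (simp add: Dl_def Xd)
  have Dsup: "Dl j k = 0" if "n < j \<or> n < k" for j k
    using Xs As that unfolding supported_on_def Dl_def by auto
  have ZD: "Zs n Dl a = Zs n X a - Zs n A a" for a
    unfolding Zs_def Dl_def by (simp add: sum_subtractf left_diff_distrib)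
  have ZY: "Zs n Y a = 2 * Zs n A a - Zs n X a" for a
    unfolding Zs_def Ydef by (simp add: sum_subtractf left_diff_distrib sum_distrib_left mult.assoc)
  have ReX: "0 \<le> Re (Zs n X a)" for a
    using Xw[of a] pi_gt_zero unfolding wigner_Zs by (simp add: zero_le_mult_iff zero_le_divide_iff)
  have ReY: "0 \<le> Re (Zs n Y a)" for a
    using Yw[of a] pi_gt_zero unfolding wigner_Zs by (simp add: zero_le_mult_iff zero_le_divide_iff)
  have bnd: "\<bar>Re (Zs n Dl a)\<bar> \<le> Re (Zs n A a)" for a
    using ReX[of a] ReY[of a] unfolding ZD ZY by simp
  obtain j1 k1 where jk1: "X j1 k1 \<noteq> A j1 k1" using XA by (auto simp: fun_eq_iff)
  then have D1: "Dl j1 k1 \<noteq> 0" by (simp add: Dl_def)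
  then have "j1 \<noteq> k1" using Dd by auto
  have "j1 \<le> n" "k1 \<le> n" using Dsup D1 by (meson not_le)+
  obtain j0 m where m1: "1 \<le> m" and jm: "j0 + m \<le> n" and Dnz: "Dl j0 (j0 + m) \<noteq> 0"
  proof (cases "j1 < k1")
    case True
    then show ?thesis using that[of "k1 - j1" j1] D1 \<open>k1 \<le> n\<close> by simp
  next
    case False
    then have "k1 < j1" using \<open>j1 \<noteq> k1\<close> by simp
    moreover have "Dl k1 j1 \<noteq> 0" using D1 Dh[of k1 j1] by auto
    ultimately show ?thesis using that[of "j1 - k1" k1] \<open>j1 \<le> n\<close> by simp
  qed
  have mn: "m \<le> n" using jm by simp
  have j0n: "j0 \<le> n - m" using jm by simp
  define p where "p = radp n A"
  define z0 where "z0 = Dl j0 (j0 + m)"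
  define c where "c = cnj z0 / of_real (cmod z0)"
  have z00: "cmod z0 > 0" using Dnz by (simp add: z0_def)
  have cn: "cmod c = 1" using z00 by (simp add: c_def norm_divide)
  have cz: "c * z0 = of_real (cmod z0)"
  proof -
    have e1: "cnj z0 * z0 = of_real ((cmod z0)\<^sup>2)" using complex_norm_square[of z0] by (simp only: mult.commute)
    have "c * z0 = (cnj z0 * z0) / of_real (cmod z0)" by (simp add: c_def)
    also have "\<dots> = of_real ((cmod z0)\<^sup>2 / cmod z0)" unfolding e1 by (simp only: of_real_divide)
    also have "(cmod z0)\<^sup>2 / cmod z0 = cmod z0" using z00 by (simp add: power2_eq_square)
    finally show ?thesis .
  qed
  define u where "u = (\<Sum>j\<le>n - m. smult (Re (c * Dl j (j + m))) (Mp m j))"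
  have poly_u: "poly u x = Re (c * (\<Sum>j\<le>n - m. Dl j (j + m) * of_real (poly (Mp m j) x)))" for x
    unfolding u_def poly_sum poly_smult sum_distrib_left Re_sum
    by (intro sum.cong refl) (simp only: mult.assoc[symmetric] Re_mult_of_real)
  have bd: "(2 * r) ^ m * \<bar>poly u (r\<^sup>2)\<bar> \<le> poly p (r\<^sup>2)" if r0: "0 \<le> r" for r
  proof -
    have "\<bar>poly u (r\<^sup>2)\<bar> \<le> cmod (\<Sum>j\<le>n - m. Dl j (j + m) * of_real (poly (Mp m j) (r\<^sup>2)))"
    proof -
      let ?H = "\<Sum>j\<le>n - m. Dl j (j + m) * of_real (poly (Mp m j) (r\<^sup>2))"
      have "\<bar>Re (c * ?H)\<bar> \<le> cmod (c * ?H)" by (rule abs_Re_le_cmod)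
      also have "\<dots> = cmod ?H" using cn by (simp add: norm_mult)
      finally show ?thesis unfolding poly_u .
    qed
    then have "(2 * r) ^ m * \<bar>poly u (r\<^sup>2)\<bar> \<le> (2 * r) ^ m * cmod (\<Sum>j\<le>n - m. Dl j (j + m) * of_real (poly (Mp m j) (r\<^sup>2)))"
      using r0 by (intro mult_left_mono) auto
    also have "\<dots> \<le> poly p (r\<^sup>2)" unfolding p_def
      by (rule offdiag_bound[OF Ad Dh bnd mn r0])
    finally show ?thesis .
  qed
  have u0: "u \<noteq> 0"
  proof
    assume "u = 0"
    then have "Re (c * Dl j0 (j0 + m)) = 0"
      using tri_indep[OF degree_Mp[of m] lead_Mp[of m], where c = "\<lambda>j. Re (c * Dl j (j + m))" and d = "n - m" and j = j0] j0n
      unfolding u_def by blast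
    then have "Re (c * z0) = 0" by (simp only: z0_def)
    moreover have "Re (c * z0) = cmod z0" unfolding cz by simp
    ultimately show False using z00 by simp
  qed
  have du: "degree u \<le> n - m" unfolding u_def by (rule tri_degree[OF degree_Mp[of m]])
  have ReAnn: "Re (A n n) \<noteq> 0"
  proof
    assume "Re (A n n) = 0"
    moreover have "Im (A n n) = 0" using Ah[of n n] by (metis Reals_cnj_iff complex_is_Real_iff)
    ultimately show False using Ann by (simp add: complex_eq_iff)
  qed
  have dp: "degree p = n"
  proof (rule antisym)
    show "degree p \<le> n" unfolding p_def radp_def by (rule tri_degree[OF degree_Mp[of 0]])
    have "coeff p n = Re (A n n) * coeff (Mp 0 n) n"
      unfolding p_def radp_def by (rule tri_coeff[OF degree_Mp[of 0]])
    then have "coeff p n \<noteq> 0" using ReAnn lead_Mp by simp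
    then show "n \<le> degree p" by (rule le_degree)
  qed
  have pnn: "0 \<le> poly p x" if x0: "0 \<le> x" for x
  proof -
    define a where "a = complex_of_real (sqrt x)"
    have ca: "(cmod a)\<^sup>2 = x" using x0 by (simp add: a_def)
    have "wigner n A a = 2 / pi * exp (- 2 * (cmod a)\<^sup>2) * poly (radp n A) ((cmod a)\<^sup>2)"
      by (rule wigner_diag[OF Ad])
    then have "0 \<le> 2 / pi * exp (- 2 * x) * poly p x" using Aw[of a] unfolding ca p_def by simp
    moreover have pos: "0 < 2 / pi * exp (- 2 * x)" using pi_gt_zero by simp
    ultimately show ?thesis
    proof (cases "0 \<le> poly p x")
      case False
      then have "2 / pi * exp (- 2 * x) * poly p x < 0" using pos by (intro mult_pos_neg) auto
      then show ?thesis using \<open>0 \<le> 2 / pi * exp (- 2 * x) * poly p x\<close> by linarith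
    qed
  qed
  obtain e K where de: "degree e \<le> n" and nm: "\<forall>\<tau>. e \<noteq> smult \<tau> p"
      and ebound: "\<forall>x\<ge>0. \<bar>poly e x\<bar> \<le> K * poly p x"
    using poly_perturb[OF m1 mn dp du u0 pnn bd] by blast
  obtain b where eb: "e = (\<Sum>k\<le>n. smult (b k) (Mp 0 k))"
    using tri_span[OF degree_Mp[of 0] lead_Mp[of 0] de] by blast
  show False
    using perturb_contra[OF Aext eb] nm ebound pnn unfolding p_def by blast
qed

theorem lemma3:
  fixes n :: nat
  assumes "1 \<le> n"
  shows "extr (Aoplus n) - Aoplus (n - 1) \<subseteq> extr (Aplus n)"
proof
  fix A assume "A \<in> extr (Aoplus n) - Aoplus (n - 1)"
  then have Aext: "A \<in> extr (Aoplus n)" and nA: "A \<notin> Aoplus (n - 1)" by auto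
  have AO: "A \<in> Aoplus n" using Aext by (simp add: extr_def)
  have Ann: "A n n \<noteq> 0" using not_prev[OF AO assms] nA by blast
  have AP: "A \<in> Aplus n" using AO by (simp add: Aoplus_def)
  have Ad: "\<And>j k. j \<noteq> k \<Longrightarrow> A j k = 0" using AO unfolding Aoplus_def by blast
  have extA: "\<forall>x\<in>Aoplus n. \<forall>y\<in>Aoplus n. A = (\<lambda>j k. (x j k + y j k) / 2) \<longrightarrow> x = A \<and> y = A"
    using Aext unfolding extr_def by blast
  have "\<forall>X\<in>Aplus n. \<forall>Y\<in>Aplus n. A = (\<lambda>j k. (X j k + Y j k) / 2) \<longrightarrow> X = A \<and> Y = A"
  proof (intro ballI impI)
    fix X Y assume X: "X \<in> Aplus n" and Y: "Y \<in> Aplus n" and mid: "A = (\<lambda>j k. (X j k + Y j k) / 2)"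
    define dX where "dX = (\<lambda>j k. if j = k then X j k else (0::complex))"
    define dY where "dY = (\<lambda>j k. if j = k then Y j k else (0::complex))"
    have dXO: "dX \<in> Aoplus n" unfolding dX_def by (rule diag_in[OF X])
    have dYO: "dY \<in> Aoplus n" unfolding dY_def by (rule diag_in[OF Y])
    have mid2: "A = (\<lambda>j k. (dX j k + dY j k) / 2)"
    proof (intro ext allI)
      fix j k
      show "A j k = (dX j k + dY j k) / 2"
      proof (cases "j = k")
        case True
        then show ?thesis using mid by (simp add: dX_def dY_def)
      next
        case False
        then show ?thesis using Ad[OF False] by (simp add: dX_def dY_def)
      qed
    qed
    have "dX = A" using extA[rule_format, OF dXO dYO mid2] by (rule conjunct1)
    have Xd: "X j j = A j j" for j
    proof -
      have "dX j j = A j j" using \<open>dX = A\<close> by simp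
      then show ?thesis unfolding dX_def by simp
    qed
    have XA: "X = A" by (rule key[OF assms Aext Ann X Y mid Xd])
    have "Y = A"
    proof (intro ext)
      fix j k
      have "A j k = (X j k + Y j k) / 2" using mid by simp
      then show "Y j k = A j k" using XA by (simp add: field_simps)
    qed
    then show "X = A \<and> Y = A" using XA by simp
  qed
  then show "A \<in> extr (Aplus n)" unfolding extr_def using AP by blast
qed

end
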